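(* Let $D,\ell\in\mathbb{N}$ and $m=\ell D$. Suppose $H,A\subset[0,1)$ are $2^{-m}$-sets such that $H$ is $(D,\ell,R)$-uniform and $A$ is $(D,\ell,R')$-uniform. Then \[ |A+H|\ge2^{-m/D}|H|\prod_{s\in[\ell]:\,R_s=1}R'_s. \]
   Context: A $2^{-m}$-set is a set all of whose elements are integer multiples of $2^{-m}$. $[\ell]=\{0,\dots,\ell-1\}$. $\mathcal{D}_s$ is the family of dyadic intervals $[j2^{-s},(j+1)2^{-s})$, $\mathcal{D}_s(E)$ those meeting $E$, and $\mathcal{N}(E,s)=|\mathcal{D}_s(E)|$. Given a sequence $(R_s)_{s\in[\ell]}$ with values in $[1,2^D]$, a $2^{-m}$-set $A$ is $(D,\ell,R)$-uniform if $\mathcal{N}(A\cap I,(s+1)D)=R_s$ for every $s\in[\ell]$ and every $I\in\mathcal{D}_{sD}(A)$. $A+H=\{a+h:a\in A,h\in H\}$. *)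

theory Defs
  imports Complex_Main
begin

definition dyadic_grid_set :: "nat \<Rightarrow> real set \<Rightarrow> bool" where
  "dyadic_grid_set m E \<longleftrightarrow> (\<forall>x\<in>E. \<exists>k::int. x = of_int k / 2 ^ m)"

definition dyadic_intervals :: "nat \<Rightarrow> real set set" where
  "dyadic_intervals s = {{x. of_int j / 2 ^ s \<le> x \<and> x < (of_int j + 1) / 2 ^ s} | j::int. True}"

definition dyadic_intervals_meeting :: "nat \<Rightarrow> real set \<Rightarrow> real set set" where
  "dyadic_intervals_meeting s E = {I \<in> dyadic_intervals s. I \<inter> E \<noteq> {}}"

definition covering_number :: "real set \<Rightarrow> nat \<Rightarrow> nat" where
  "covering_number E s = card (dyadic_intervals_meeting s E)"

definition uniform_set :: "nat \<Rightarrow> nat \<Rightarrow> (nat \<Rightarrow> nat) \<Rightarrow> real set \<Rightarrow> bool" where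
  "uniform_set D l R A \<longleftrightarrow>
     (\<forall>s<l. \<forall>I\<in>dyadic_intervals_meeting (s * D) A.
        covering_number (A \<inter> I) ((s + 1) * D) = R s)"

definition sumset :: "real set \<Rightarrow> real set \<Rightarrow> real set" where
  "sumset A H = {a + h | a h. a \<in> A \<and> h \<in> H}"

end

theory Submission
  imports Defs
begin

definition pre :: "nat \<Rightarrow> nat \<Rightarrow> real \<Rightarrow> int" where
  "pre D s x = \<lfloor>x * 2 ^ (s * D)\<rfloor>"

lemma pre_Suc: "pre D s x = pre D (Suc s) x div 2 ^ D"
proof -
  have "x * 2 ^ (s * D) = (x * 2 ^ (Suc s * D)) / real_of_int (2 ^ D)"
    by (simp add: power_add mult.commute)
  then show ?thesis unfolding pre_def
    by (metis floor_divide_real_eq_div zero_le_numeral zero_le_power)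
qed

lemma pre_sum: "pre D s a + pre D s h \<le> pre D s (a + h) \<and> pre D s (a + h) \<le> pre D s a + pre D s h + 1"
  unfolding pre_def by (auto simp: distrib_right) linarith+

lemma pre_0: "x \<in> {0..<1} \<Longrightarrow> pre D 0 x = 0"
  unfolding pre_def by (simp add: floor_eq_iff)

lemma Ival_iff: "(of_int j / 2 ^ t \<le> (x::real) \<and> x < (of_int j + 1) / 2 ^ t) \<longleftrightarrow> \<lfloor>x * 2 ^ t\<rfloor> = j"
  by (simp add: floor_eq_iff pos_divide_le_eq pos_less_divide_eq)

lemma meeting_eq: "dyadic_intervals_meeting t E =
   (\<lambda>j. {x. of_int j / 2 ^ t \<le> x \<and> x < (of_int j + 1) / 2 ^ t}) ` ((\<lambda>x. \<lfloor>x * 2 ^ t\<rfloor>) ` E)"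
  unfolding dyadic_intervals_meeting_def dyadic_intervals_def
  by (auto simp only: Ival_iff mem_Collect_eq)

lemma Ival_inj: "inj (\<lambda>j::int. {x::real. of_int j / 2 ^ t \<le> x \<and> x < (of_int j + 1) / 2 ^ t})"
proof (rule injI)
  fix j j' :: int
  assume "{x::real. of_int j / 2 ^ t \<le> x \<and> x < (of_int j + 1) / 2 ^ t} = {x. of_int j' / 2 ^ t \<le> x \<and> x < (of_int j' + 1) / 2 ^ t}"
  moreover have "of_int j / 2 ^ t \<in> {x::real. of_int j / 2 ^ t \<le> x \<and> x < (of_int j + 1) / 2 ^ t}"
    by (simp add: divide_strict_right_mono)
  ultimately have "of_int j / 2 ^ t \<in> {x::real. of_int j' / 2 ^ t \<le> x \<and> x < (of_int j' + 1) / 2 ^ t}" by simp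
  then have "\<lfloor>of_int j / 2 ^ t * (2::real) ^ t\<rfloor> = j'" by (simp only: mem_Collect_eq Ival_iff)
  then show "j = j'" by simp
qed

lemma cov_eq: "covering_number E t = card ((\<lambda>x. \<lfloor>x * 2 ^ t\<rfloor>) ` E)"
  unfolding covering_number_def meeting_eq
  by (rule card_image, rule inj_on_subset[OF Ival_inj], simp)

lemma uniform_pre:
  assumes "uniform_set D l R A" "s < l" "x \<in> A"
  shows "card (pre D (Suc s) ` {y\<in>A. pre D s y = pre D s x}) = R s"
proof -
  let ?I = "{y::real. of_int (pre D s x) / 2 ^ (s*D) \<le> y \<and> y < (of_int (pre D s x) + 1) / 2 ^ (s*D)}"
  have "?I \<in> dyadic_intervals_meeting (s*D) A"
    unfolding meeting_eq using assms(3) by (auto simp: pre_def)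
  then have "covering_number (A \<inter> ?I) ((s+1)*D) = R s" using assms unfolding uniform_set_def by auto
  moreover have "A \<inter> ?I = {y\<in>A. pre D s y = pre D s x}" unfolding pre_def by (auto simp only: Ival_iff mem_Collect_eq Int_iff)
  ultimately show ?thesis by (simp add: cov_eq pre_def)
qed

lemma card_le_fibers:
  assumes "finite X" "\<And>z. z \<in> g ` X \<Longrightarrow> card {x\<in>X. g x = z} \<le> k"
  shows "card X \<le> k * card (g ` X)"
proof -
  have "X = (\<Union>z\<in>g ` X. {x\<in>X. g x = z})" by auto
  then have "card X \<le> (\<Sum>z\<in>g ` X. card {x\<in>X. g x = z})"
    by (metis card_UN_le assms(1) finite_imageI)
  also have "\<dots> \<le> (\<Sum>z\<in>g ` X. k)" by (rule sum_mono) (use assms in auto)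
  finally show ?thesis by (simp add: mult.commute)
qed

lemma grid_finite:
  assumes "E \<subseteq> {0..<1}" "dyadic_grid_set m E"
  shows "finite E"
proof -
  have "E \<subseteq> (\<lambda>k::int. of_int k / 2 ^ m) ` {0..<2^m}"
  proof
    fix x assume x: "x \<in> E"
    then obtain k :: int where k: "x = of_int k / 2 ^ m" using assms(2) unfolding dyadic_grid_set_def by auto
    have "0 \<le> x" "x < 1" using x assms(1) by auto
    moreover have kx: "(of_int k::real) = x * 2 ^ m" using k by simp
    ultimately have "0 \<le> (of_int k::real)" "(of_int k::real) < 2 ^ m"
      by (simp, simp add: mult_strict_right_mono[of x 1, simplified])+
    then have "0 \<le> k" "k < 2 ^ m" by (simp, metis of_int_less_iff of_int_numeral of_int_power)+
    then show "x \<in> (\<lambda>k::int. of_int k / 2 ^ m) ` {0..<2^m}" using k by auto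
  qed
  then show ?thesis by (rule finite_subset) auto
qed

lemma grid_inj:
  assumes "dyadic_grid_set m E" "m = l * D"
  shows "inj_on (pre D l) E"
proof (rule inj_onI)
  fix x y assume "x \<in> E" "y \<in> E" "pre D l x = pre D l y"
  then obtain k k' :: int where "x = of_int k / 2 ^ m" "y = of_int k' / 2 ^ m"
    using assms(1) unfolding dyadic_grid_set_def by blast
  moreover with \<open>pre D l x = pre D l y\<close> have "k = k'" using assms(2) by (simp add: pre_def mult.commute)
  ultimately show "x = y" by simp
qed


definition choice :: "nat \<Rightarrow> real set \<Rightarrow> nat \<Rightarrow> int \<Rightarrow> int" where
  "choice D A t p = pre D (Suc t) (SOME a. a \<in> A \<and> pre D t a = p)"

primrec Asub :: "nat \<Rightarrow> real set \<Rightarrow> (nat \<Rightarrow> nat) \<Rightarrow> nat \<Rightarrow> real set" where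
  "Asub D A R 0 = A"
| "Asub D A R (Suc t) = {a \<in> Asub D A R t. R t \<noteq> 1 \<longrightarrow> pre D (Suc t) a = choice D A t (pre D t a)}"

lemma Asub_sub: "Asub D A R t \<subseteq> A"
  by (induction t) auto

lemma Asub_mono: "t \<le> t' \<Longrightarrow> Asub D A R t' \<subseteq> Asub D A R t"
  by (induction t' rule: dec_induct) auto

lemma Asub_sat: "a \<in> A \<Longrightarrow> b \<in> Asub D A R t \<Longrightarrow> pre D t a = pre D t b \<Longrightarrow> a \<in> Asub D A R t"
proof (induction t arbitrary: a b)
  case 0 then show ?case by simp
next
  case (Suc t)
  have "pre D t a = pre D t b" using Suc.prems(3) pre_Suc[of D t] by metis
  moreover have "b \<in> Asub D A R t" using Suc.prems(2) by simp
  ultimately have "a \<in> Asub D A R t" using Suc.IH[OF Suc.prems(1)] by blast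
  moreover have "R t \<noteq> 1 \<longrightarrow> pre D (Suc t) b = choice D A t (pre D t b)" using Suc.prems(2) by simp
  ultimately show ?case using Suc.prems(3) \<open>pre D t a = pre D t b\<close> by simp
qed

lemma Asub_card:
  assumes "finite A" "A \<noteq> {}" "t \<le> l"
    and U: "\<And>s x. s < l \<Longrightarrow> x \<in> A \<Longrightarrow> card (pre D (Suc s) ` {y\<in>A. pre D s y = pre D s x}) = R' s"
  shows "card (pre D t ` Asub D A R t) \<ge> (\<Prod>s\<in>{s. s < t \<and> R s = 1}. R' s)"
  using assms(3)
proof (induction t)
  case 0
  then show ?case using assms(1,2) by (simp add: Suc_le_eq card_gt_0_iff)
next
  case (Suc t)
  then have tl: "t < l" and IH: "card (pre D t ` Asub D A R t) \<ge> (\<Prod>s\<in>{s. s < t \<and> R s = 1}. R' s)" by auto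
  have finA: "finite (Asub D A R t)" by (rule finite_subset[OF Asub_sub assms(1)])
  show ?case
  proof (cases "R t = 1")
    case True
    have eqset: "{s. s < Suc t \<and> R s = 1} = insert t {s. s < t \<and> R s = 1}" using True by auto
    have AS: "Asub D A R (Suc t) = Asub D A R t" using True by auto
    let ?P = "pre D t ` Asub D A R t"
    let ?piece = "\<lambda>p. pre D (Suc t) ` {y\<in>A. pre D t y = p}"
    have un: "pre D (Suc t) ` Asub D A R t = (\<Union>p\<in>?P. ?piece p)"
    proof
      show "pre D (Suc t) ` Asub D A R t \<subseteq> (\<Union>p\<in>?P. ?piece p)"
      proof
        fix z assume "z \<in> pre D (Suc t) ` Asub D A R t"
        then obtain b where b: "b \<in> Asub D A R t" "z = pre D (Suc t) b" by blast
        then have "b \<in> A" using Asub_sub[of D A R t] by blast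
        then have "z \<in> ?piece (pre D t b)" using b by blast
        then show "z \<in> (\<Union>p\<in>?P. ?piece p)" using b by blast
      qed
      show "(\<Union>p\<in>?P. ?piece p) \<subseteq> pre D (Suc t) ` Asub D A R t"
      proof
        fix z assume "z \<in> (\<Union>p\<in>?P. ?piece p)"
        then obtain b y where b: "b \<in> Asub D A R t" "y \<in> A" "pre D t y = pre D t b" "z = pre D (Suc t) y" by blast
        then have "y \<in> Asub D A R t" using Asub_sat by blast
        then show "z \<in> pre D (Suc t) ` Asub D A R t" using b by blast
      qed
    qed
    have "card (\<Union>p\<in>?P. ?piece p) = (\<Sum>p\<in>?P. card (?piece p))"
    proof (rule card_UN_disjoint)
      show "finite ?P" using finA by simp
      show "\<forall>p\<in>?P. finite (?piece p)" using assms(1) by auto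
      show "\<forall>p\<in>?P. \<forall>q\<in>?P. p \<noteq> q \<longrightarrow> ?piece p \<inter> ?piece q = {}"
      proof (intro ballI impI)
        fix p q :: int assume "p \<noteq> q"
        show "?piece p \<inter> ?piece q = {}"
        proof (rule ccontr)
          assume "?piece p \<inter> ?piece q \<noteq> {}"
          then obtain y y' where "y \<in> A" "pre D t y = p" "y' \<in> A" "pre D t y' = q" "pre D (Suc t) y = pre D (Suc t) y'"
            by blast
          then have "p = q" using pre_Suc[of D t y] pre_Suc[of D t y'] by simp
          then show False using \<open>p \<noteq> q\<close> by simp
        qed
      qed
    qed
    also have "\<dots> = (\<Sum>p\<in>?P. R' t)"
    proof (rule sum.cong)
      fix p assume "p \<in> ?P"
      then obtain b where "b \<in> Asub D A R t" "p = pre D t b" by auto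
      then show "card (?piece p) = R' t" using U[OF tl, of b] Asub_sub[of D A R t] by auto
    qed simp
    finally have "card (pre D (Suc t) ` Asub D A R (Suc t)) = R' t * card ?P" using un AS by simp
    moreover have "(\<Prod>s\<in>{s. s < Suc t \<and> R s = 1}. R' s) = R' t * (\<Prod>s\<in>{s. s < t \<and> R s = 1}. R' s)"
      unfolding eqset by (subst prod.insert) auto
    ultimately show ?thesis using IH by simp
  next
    case False
    have eqset: "{s. s < Suc t \<and> R s = 1} = {s. s < t \<and> R s = 1}" using False less_Suc_eq by auto
    have "pre D t ` Asub D A R t \<subseteq> pre D t ` Asub D A R (Suc t)"
    proof
      fix p assume "p \<in> pre D t ` Asub D A R t"
      then obtain b where b: "b \<in> Asub D A R t" "p = pre D t b" by auto
      define a where "a = (SOME a. a \<in> A \<and> pre D t a = p)"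
      have "b \<in> A" using b(1) Asub_sub[of D A R t] by blast
      then have "b \<in> A \<and> pre D t b = p" using b(2) by simp
      then have "a \<in> A \<and> pre D t a = p" unfolding a_def by (rule someI)
      then have aA: "a \<in> A" "pre D t a = p" by auto
      have aS: "a \<in> Asub D A R t" using Asub_sat[OF aA(1) b(1)] aA(2) b(2) by simp
      have "choice D A t p = pre D (Suc t) a" unfolding choice_def a_def by (rule refl)
      then have "pre D (Suc t) a = choice D A t (pre D t a)" using aA(2) by simp
      then have "a \<in> Asub D A R (Suc t)" using aS by simp
      then show "p \<in> pre D t ` Asub D A R (Suc t)" using aA(2) by (intro image_eqI[where x=a]) auto
    qed
    moreover have "pre D t ` Asub D A R (Suc t) = (\<lambda>z. z div 2 ^ D) ` pre D (Suc t) ` Asub D A R (Suc t)"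
      by (simp add: image_image pre_Suc[of D t])
    moreover have "finite (Asub D A R (Suc t))" by (rule finite_subset[OF Asub_sub assms(1)])
    ultimately have "card (pre D t ` Asub D A R t) \<le> card (pre D (Suc t) ` Asub D A R (Suc t))"
    proof -
      assume h1: "pre D t ` Asub D A R t \<subseteq> pre D t ` Asub D A R (Suc t)"
        and h2: "pre D t ` Asub D A R (Suc t) = (\<lambda>z. z div 2 ^ D) ` pre D (Suc t) ` Asub D A R (Suc t)"
        and h3: "finite (Asub D A R (Suc t))"
      have "card (pre D t ` Asub D A R t) \<le> card (pre D t ` Asub D A R (Suc t))"
        using h1 h3 by (intro card_mono) auto
      also have "\<dots> \<le> card (pre D (Suc t) ` Asub D A R (Suc t))"
        unfolding h2 using h3 by (intro card_image_le) auto
      finally show ?thesis .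
    qed
    then show ?thesis using IH eqset by simp
  qed
qed

lemma card_le2: "S \<subseteq> {x, y} \<Longrightarrow> card S \<le> 2"
proof -
  assume "S \<subseteq> {x, y}"
  then have "card S \<le> card {x, y}" by (intro card_mono) auto
  also have "\<dots> \<le> 2" by (simp add: card_insert_if)
  finally show ?thesis .
qed

lemma sum_count:
  assumes finA: "finite A'" and finH: "finite H"
    and A01: "A' \<subseteq> {0..<1}" and H01: "H \<subseteq> {0..<1}"
    and injA: "inj_on (pre D l) A'" and injH: "inj_on (pre D l) H"
    and cond: "\<And>s. s < l \<Longrightarrow> (\<forall>a\<in>A'. \<forall>b\<in>A'. pre D s a = pre D s b \<longrightarrow> pre D (Suc s) a = pre D (Suc s) b)
                  \<or> (\<forall>a\<in>H. \<forall>b\<in>H. pre D s a = pre D s b \<longrightarrow> pre D (Suc s) a = pre D (Suc s) b)"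
  shows "card A' * card H \<le> 2 ^ l * card (sumset A' H)"
proof -
  have S: "sumset A' H = (\<lambda>(a, h). a + h) ` (A' \<times> H)" unfolding sumset_def by auto
  have "card (A' \<times> H) \<le> 2 ^ l * card ((\<lambda>(a, h). a + h) ` (A' \<times> H))"
  proof (rule card_le_fibers)
    show "finite (A' \<times> H)" using finA finH by simp
    fix z
    define F where "F = {x \<in> A' \<times> H. (\<lambda>(a, h). a + h) x = z}"
    define \<phi> where "\<phi> = (\<lambda>t (a, h). (pre D t a, pre D t h))"
    have finF: "finite F" unfolding F_def using finA finH by simp
    have step: "t \<le> l \<Longrightarrow> card (\<phi> t ` F) \<le> 2 ^ t" for t
    proof (induction t)
      case 0
      have "\<phi> 0 ` F \<subseteq> {(0, 0)}" unfolding \<phi>_def F_def using A01 H01 pre_0 by fastforce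
      then have "card (\<phi> 0 ` F) \<le> card {(0::int, 0::int)}" by (intro card_mono) auto
      then show ?case by simp
    next
      case (Suc t)
      then have tl: "t < l" and IH: "card (\<phi> t ` F) \<le> 2 ^ t" by auto
      define g where "g = (\<lambda>(\<alpha>::int, \<beta>::int). (\<alpha> div 2 ^ D, \<beta> div (2::int) ^ D))"
      have gi: "g ` \<phi> (Suc t) ` F = \<phi> t ` F"
        unfolding image_image g_def \<phi>_def by (rule image_cong) (auto simp: pre_Suc[of D t])
      have "card (\<phi> (Suc t) ` F) \<le> 2 * card (g ` \<phi> (Suc t) ` F)"
      proof (rule card_le_fibers)
        show "finite (\<phi> (Suc t) ` F)" using finF by simp
        fix w
        let ?Fib = "{u \<in> \<phi> (Suc t) ` F. g u = w}"
        let ?Y = "pre D (Suc t) z"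
        have mem: "\<exists>a h. a \<in> A' \<and> h \<in> H \<and> a + h = z \<and> u = (pre D (Suc t) a, pre D (Suc t) h)
                        \<and> pre D t a = fst w \<and> pre D t h = snd w" if "u \<in> ?Fib" for u
        proof -
          from that obtain a h where ah: "(a, h) \<in> F" "u = \<phi> (Suc t) (a, h)" "g u = w" by auto
          then have "g u = (pre D t a, pre D t h)" unfolding g_def \<phi>_def by (simp add: pre_Suc[of D t])
          then have "w = (pre D t a, pre D t h)" using ah(3) by simp
          moreover have "a \<in> A'" "h \<in> H" "a + h = z" using ah(1) unfolding F_def by auto
          moreover have "u = (pre D (Suc t) a, pre D (Suc t) h)" using ah(2) unfolding \<phi>_def by simp
          ultimately show ?thesis by auto
        qed
        have sumY: "fst u + snd u = ?Y \<or> fst u + snd u = ?Y - 1" if uF: "u \<in> ?Fib" for u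
        proof -
          obtain a h where ah: "a + h = z" "u = (pre D (Suc t) a, pre D (Suc t) h)" using mem[OF uF] by blast
          show ?thesis using pre_sum[of D "Suc t" a h] ah by auto
        qed
        show "card ?Fib \<le> 2"
        proof (cases "?Fib = {}")
          case True then show ?thesis by (metis card.empty le0)
        next
          case False
          then obtain u0 where u0: "u0 \<in> ?Fib" by blast
          from cond[OF tl] show ?thesis
          proof
            assume cA: "\<forall>a\<in>A'. \<forall>b\<in>A'. pre D t a = pre D t b \<longrightarrow> pre D (Suc t) a = pre D (Suc t) b"
            have "fst u = fst u0" if uF: "u \<in> ?Fib" for u
            proof -
              obtain a h where ah: "a \<in> A'" "u = (pre D (Suc t) a, pre D (Suc t) h)" "pre D t a = fst w"
                using mem[OF uF] by blast
              obtain a0 h0 where ah0: "a0 \<in> A'" "u0 = (pre D (Suc t) a0, pre D (Suc t) h0)" "pre D t a0 = fst w"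
                using mem[OF u0] by blast
              have "pre D t a = pre D t a0" using ah(3) ah0(3) by simp
              then have "pre D (Suc t) a = pre D (Suc t) a0" by (rule cA[rule_format, OF ah(1) ah0(1)])
              then show ?thesis using ah(2) ah0(2) by simp
            qed
            then have "?Fib \<subseteq> {(fst u0, ?Y - fst u0), (fst u0, ?Y - 1 - fst u0)}"
            proof (intro subsetI)
              fix u assume u: "u \<in> ?Fib"
              obtain p q where pq: "u = (p, q)" by (cases u)
              have "p = fst u0" using \<open>u \<in> ?Fib \<Longrightarrow> fst u = fst u0\<close>[OF u] pq by simp
              moreover have "p + q = ?Y \<or> p + q = ?Y - 1" using sumY[OF u] pq by simp
              ultimately show "u \<in> {(fst u0, ?Y - fst u0), (fst u0, ?Y - 1 - fst u0)}" using pq by auto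
            qed
            then show ?thesis by (rule card_le2)
          next
            assume cH: "\<forall>a\<in>H. \<forall>b\<in>H. pre D t a = pre D t b \<longrightarrow> pre D (Suc t) a = pre D (Suc t) b"
            have "snd u = snd u0" if uF: "u \<in> ?Fib" for u
            proof -
              obtain a h where ah: "h \<in> H" "u = (pre D (Suc t) a, pre D (Suc t) h)" "pre D t h = snd w"
                using mem[OF uF] by blast
              obtain a0 h0 where ah0: "h0 \<in> H" "u0 = (pre D (Suc t) a0, pre D (Suc t) h0)" "pre D t h0 = snd w"
                using mem[OF u0] by blast
              have "pre D t h = pre D t h0" using ah(3) ah0(3) by simp
              then have "pre D (Suc t) h = pre D (Suc t) h0" by (rule cH[rule_format, OF ah(1) ah0(1)])
              then show ?thesis using ah(2) ah0(2) by simp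
            qed
            then have "?Fib \<subseteq> {(?Y - snd u0, snd u0), (?Y - 1 - snd u0, snd u0)}"
            proof (intro subsetI)
              fix u assume u: "u \<in> ?Fib"
              obtain p q where pq: "u = (p, q)" by (cases u)
              have "q = snd u0" using \<open>u \<in> ?Fib \<Longrightarrow> snd u = snd u0\<close>[OF u] pq by simp
              moreover have "p + q = ?Y \<or> p + q = ?Y - 1" using sumY[OF u] pq by simp
              ultimately show "u \<in> {(?Y - snd u0, snd u0), (?Y - 1 - snd u0, snd u0)}" using pq by auto
            qed
            then show ?thesis by (rule card_le2)
          qed
        qed
      qed
      then show ?case using IH gi by simp
    qed
    have "inj_on (\<phi> l) F"
    proof (rule inj_onI)
      fix x y assume "x \<in> F" "y \<in> F" "\<phi> l x = \<phi> l y"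
      then show "x = y" unfolding F_def \<phi>_def using injA injH
        by (auto simp: inj_on_def split: prod.splits)
    qed
    then have "card F = card (\<phi> l ` F)" by (simp add: card_image)
    with step[of l] show "card {x \<in> A' \<times> H. (\<lambda>(a, h). a + h) x = z} \<le> 2 ^ l"
      unfolding F_def by simp
  qed
  then show ?thesis using S by (simp add: card_cartesian_product)
qed

lemma card1_eq: "card S = 1 \<Longrightarrow> x \<in> S \<Longrightarrow> y \<in> S \<Longrightarrow> x = y"
  by (metis card_1_singletonE singletonD)

theorem mainTheorem11:
  fixes D l m :: nat and R R' :: "nat \<Rightarrow> nat" and H A :: "real set"
  assumes "D \<ge> 1"
    and "m = l * D"
    and "\<forall>s<l. 1 \<le> R s \<and> R s \<le> 2 ^ D"
    and "\<forall>s<l. 1 \<le> R' s \<and> R' s \<le> 2 ^ D"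
    and "H \<subseteq> {0..<1}" and "A \<subseteq> {0..<1}"
    and "dyadic_grid_set m H" and "dyadic_grid_set m A"
    and "A \<noteq> {}"
    and "uniform_set D l R H" and "uniform_set D l R' A"
  shows "real (card (sumset A H)) \<ge>
           2 powr (- (real m / real D)) * real (card H) * (\<Prod>s\<in>{s. s < l \<and> R s = 1}. real (R' s))"
proof -
  note a = assms
  have finA: "finite A" using grid_finite a(6,8) by blast
  have finH: "finite H" using grid_finite a(5,7) by blast
  have UA: "\<And>s x. s < l \<Longrightarrow> x \<in> A \<Longrightarrow> card (pre D (Suc s) ` {y\<in>A. pre D s y = pre D s x}) = R' s"
    using uniform_pre[OF a(11)] by blast
  have UH: "\<And>s x. s < l \<Longrightarrow> x \<in> H \<Longrightarrow> card (pre D (Suc s) ` {y\<in>H. pre D s y = pre D s x}) = R s"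
    using uniform_pre[OF a(10)] by blast
  define A' where "A' = Asub D A R l"
  have A'A: "A' \<subseteq> A" unfolding A'_def by (rule Asub_sub)
  have finA': "finite A'" by (rule finite_subset[OF A'A finA])
  define P where "P = (\<Prod>s\<in>{s. s < l \<and> R s = 1}. R' s)"
  have "P \<le> card (pre D l ` A')" unfolding P_def A'_def
    by (rule Asub_card[OF finA a(9) le_refl UA])
  also have "\<dots> \<le> card A'" by (rule card_image_le[OF finA'])
  finally have PA: "P \<le> card A'" .
  have cond: "(\<forall>x\<in>A'. \<forall>y\<in>A'. pre D s x = pre D s y \<longrightarrow> pre D (Suc s) x = pre D (Suc s) y)
                  \<or> (\<forall>x\<in>H. \<forall>y\<in>H. pre D s x = pre D s y \<longrightarrow> pre D (Suc s) x = pre D (Suc s) y)"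
    if sl: "s < l" for s
  proof (cases "R s = 1")
    case True
    have "\<forall>x\<in>H. \<forall>y\<in>H. pre D s x = pre D s y \<longrightarrow> pre D (Suc s) x = pre D (Suc s) y"
    proof (intro ballI impI)
      fix x y assume xy: "x \<in> H" "y \<in> H" "pre D s x = pre D s y"
      have c1: "card (pre D (Suc s) ` {z\<in>H. pre D s z = pre D s x}) = 1" using UH[OF sl xy(1)] True by simp
      show "pre D (Suc s) x = pre D (Suc s) y"
        by (rule card1_eq[OF c1]) (use xy in auto)
    qed
    then show ?thesis by blast
  next
    case False
    have sub: "A' \<subseteq> Asub D A R (Suc s)" unfolding A'_def by (rule Asub_mono) (use sl in simp)
    have "\<forall>x\<in>A'. \<forall>y\<in>A'. pre D s x = pre D s y \<longrightarrow> pre D (Suc s) x = pre D (Suc s) y"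
    proof (intro ballI impI)
      fix x y assume xy: "x \<in> A'" "y \<in> A'" "pre D s x = pre D s y"
      then have "x \<in> Asub D A R (Suc s)" "y \<in> Asub D A R (Suc s)" using sub by auto
      then have "pre D (Suc s) x = choice D A s (pre D s x)" "pre D (Suc s) y = choice D A s (pre D s y)"
        using False by auto
      then show "pre D (Suc s) x = pre D (Suc s) y" using xy(3) by simp
    qed
    then show ?thesis by blast
  qed
  have injA: "inj_on (pre D l) A'" using grid_inj[OF a(8) a(2)] A'A inj_on_subset by blast
  have injH: "inj_on (pre D l) H" using grid_inj[OF a(7) a(2)] .
  have key: "card A' * card H \<le> 2 ^ l * card (sumset A' H)"
    by (rule sum_count[OF finA' finH _ a(5) injA injH cond]) (use A'A a(6) in auto)
  have "sumset A H = (\<lambda>(a, h). a + h) ` (A \<times> H)" unfolding sumset_def by auto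
  then have finS: "finite (sumset A H)" using finA finH by simp
  have "sumset A' H \<subseteq> sumset A H" using A'A unfolding sumset_def by blast
  then have "card (sumset A' H) \<le> card (sumset A H)" using finS card_mono by blast
  moreover have "P * card H \<le> card A' * card H" using PA by simp
  ultimately have nat_ineq: "P * card H \<le> 2 ^ l * card (sumset A H)"
    using key by (meson le_trans mult_le_mono2)
  have lD: "real m / real D = real l" using a(1,2) by simp
  have pw: "2 powr (- (real m / real D)) = 1 / 2 ^ l"
    unfolding lD by (simp add: powr_minus powr_realpow divide_inverse)
  have "real P * real (card H) \<le> 2 ^ l * real (card (sumset A H))"
    using nat_ineq by (metis of_nat_le_iff of_nat_mult of_nat_numeral of_nat_power)
  then have "1 / 2 ^ l * real (card H) * real P \<le> real (card (sumset A H))"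
    by (simp add: field_simps)
  then show ?thesis unfolding pw P_def by (simp add: of_nat_prod)
qed

end
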